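(* Let $\beta>0$, $h\ge0$ and $\xi$ a model. On $\Pr([0,1])$ with the weak-$*$ topology, the functional $\mathcal{P}_{\beta,h,\xi}$ is lower semi-continuous, while $\tilde{\mathcal{P}}_{\beta,h,\xi}$ is not lower semi-continuous.
   Context: A model is $\xi(t)=\sum_{p\ge2}\beta_p^2t^p$, real $\beta_p$ not all zero, with $\xi(1+\epsilon)<\infty$ for some $\epsilon>0$. For $\mu\in\Pr([0,1])$ let $\hat\mu(t)=\int_t^1\mu[0,s]ds$ and $q_*=\sup\operatorname{supp}\mu$. Define $\mathcal{P}_{\beta,h,\xi}(\mu)=\frac12\big(\int_0^1\beta^2\xi''(s)\hat\mu(s)ds+\int_0^1(\frac1{\hat\mu(s)}-\frac1{1-s})ds+h^2\hat\mu(0)\big)$, and $\tilde{\mathcal{P}}_{\beta,h,\xi}(\mu)=\frac12\big(\int_0^1\beta^2\xi'(s)\mu[0,s]ds+h^2\hat\mu(0)+\int_0^{q_*}\frac{ds}{\hat\mu(s)}+\log(1-q_* )\big)$ if $q_*<1$, and $+\infty$ if $q_*=1$. *)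

theory Defs
  imports "HOL-Probability.Probability"
begin

text \<open>A model: xi(t) = sum_{p>=2} c_p^2 t^p with real c_p, not all zero, and
  xi(1+eps) finite for some eps > 0. Coefficients are indexed by nat; c 0 = c 1 = 0.\<close>

definition is_model :: "(nat \<Rightarrow> real) \<Rightarrow> bool" where
  "is_model c \<longleftrightarrow> c 0 = 0 \<and> c 1 = 0 \<and> (\<exists>p. c p \<noteq> 0) \<and>
     (\<exists>eps>0. summable (\<lambda>p. (c p)\<^sup>2 * (1 + eps) ^ p))"

definition xi :: "(nat \<Rightarrow> real) \<Rightarrow> real \<Rightarrow> real" where
  "xi c t = (\<Sum>p. (c p)\<^sup>2 * t ^ p)"

text \<open>Pr([0,1]): Borel probability measures on the real line concentrated on [0,1].\<close>

definition Pr01 :: "real measure \<Rightarrow> bool" where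
  "Pr01 M \<longleftrightarrow> prob_space M \<and> sets M = sets borel \<and> emeasure M {0..1} = 1"

definition cdf01 :: "real measure \<Rightarrow> real \<Rightarrow> real" where
  "cdf01 M s = measure M {0..s}"

definition muhat :: "real measure \<Rightarrow> real \<Rightarrow> real" where
  "muhat M t = integral {t..1} (\<lambda>s. cdf01 M s)"

definition supp :: "real measure \<Rightarrow> real set" where
  "supp M = {x. \<forall>e>0. emeasure M (ball x e) > 0}"

definition qstar :: "real measure \<Rightarrow> real" where
  "qstar M = Sup (supp M)"

text \<open>The functional P_{beta,h,xi}. The integrand 1/muhat(s) - 1/(1-s) is nonnegative
  (as muhat(s) <= 1-s); it is integrated as a nonnegative (possibly infinite) integral,
  with 1/0 = +infinity.\<close>

definition Pfun :: "real \<Rightarrow> real \<Rightarrow> (nat \<Rightarrow> real) \<Rightarrow> real measure \<Rightarrow> ereal" where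
  "Pfun \<beta> h c M = ereal (1/2) *
     (ereal (integral {0..1} (\<lambda>s. \<beta>\<^sup>2 * deriv (deriv (xi c)) s * muhat M s))
      + enn2ereal (\<integral>\<^sup>+ s\<in>{0..<1}.
            (if muhat M s = 0 then \<infinity> else ennreal (1 / muhat M s - 1 / (1 - s))) \<partial>lborel)
      + ereal (h\<^sup>2 * muhat M 0))"

definition Ptilde :: "real \<Rightarrow> real \<Rightarrow> (nat \<Rightarrow> real) \<Rightarrow> real measure \<Rightarrow> ereal" where
  "Ptilde \<beta> h c M =
     (if qstar M < 1 then
        ereal ((1/2) * (integral {0..1} (\<lambda>s. \<beta>\<^sup>2 * deriv (xi c) s * cdf01 M s)
                 + h\<^sup>2 * muhat M 0
                 + integral {0..qstar M} (\<lambda>s. 1 / muhat M s)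
                 + ln (1 - qstar M)))
      else \<infinity>)"

definition weak_star_conv :: "(nat \<Rightarrow> real measure) \<Rightarrow> real measure \<Rightarrow> bool" where
  "weak_star_conv Ms M \<longleftrightarrow>
     (\<forall>f::real \<Rightarrow> real. continuous_on {0..1} f \<longrightarrow>
        (\<lambda>n. (LINT x:{0..1}|Ms n. f x)) \<longlonglongrightarrow> (LINT x:{0..1}|M. f x))"

text \<open>This topology is
  metrizable (Pr([0,1]) is a compact metrizable space), so lower semicontinuity is
  equivalent to its sequential version.\<close>

definition weak_star_lsc :: "(real measure \<Rightarrow> ereal) \<Rightarrow> bool" where
  "weak_star_lsc F \<longleftrightarrow>
     (\<forall>Ms M. Pr01 M \<longrightarrow> (\<forall>n. Pr01 (Ms n)) \<longrightarrow> weak_star_conv Ms M \<longrightarrow>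
        F M \<le> liminf (\<lambda>n. F (Ms n)))"

end

theory Submission
  imports Defs
begin


lemma xi_ps: "xi c = (\<lambda>z. \<Sum>n. (c n)\<^sup>2 * z ^ n)"
  by (simp add: xi_def fun_eq_iff)

lemma model_R:
  assumes "is_model c"
  obtains R where "R > 1" "\<And>z. \<bar>z\<bar> < R \<Longrightarrow> summable (\<lambda>n. (c n)\<^sup>2 * z ^ n)"
proof -
  from assms obtain eps where e: "eps > 0" "summable (\<lambda>p. (c p)\<^sup>2 * (1 + eps) ^ p)"
    unfolding is_model_def by blast
  show ?thesis
  proof (rule that[of "1+eps"])
    show "1 < 1 + eps" using e by simp
    fix z :: real assume "\<bar>z\<bar> < 1 + eps"
    then have "norm z < norm (1+eps)" using e by simp
    from powser_inside[OF e(2) this] show "summable (\<lambda>n. (c n)\<^sup>2 * z ^ n)" .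
  qed
qed

lemma xi_derivs:
  assumes "is_model c"
  shows "continuous_on {0..1} (deriv (xi c))" "continuous_on {0..1} (deriv (deriv (xi c)))"
proof -
  obtain R where R: "R > 1" "\<And>z. \<bar>z\<bar> < R \<Longrightarrow> summable (\<lambda>n. (c n)\<^sup>2 * z ^ n)"
    using model_R[OF assms] by blast
  define a where "a = (\<lambda>n. (c n)\<^sup>2)"
  have s0: "\<And>z. norm z < R \<Longrightarrow> summable (\<lambda>n. a n * z ^ n)" using R by (simp add: a_def)
  have s1: "\<And>z. norm z < R \<Longrightarrow> summable (\<lambda>n. diffs a n * z ^ n)"
    by (rule termdiff_converges) (use s0 in auto)
  have s2: "\<And>z. norm z < R \<Longrightarrow> summable (\<lambda>n. diffs (diffs a) n * z ^ n)"
    by (rule termdiff_converges) (use s1 in auto)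
  define P1 where "P1 = (\<lambda>z::real. \<Sum>n. diffs a n * z ^ n)"
  define P2 where "P2 = (\<lambda>z::real. \<Sum>n. diffs (diffs a) n * z ^ n)"
  define P3 where "P3 = (\<lambda>z::real. \<Sum>n. diffs (diffs (diffs a)) n * z ^ n)"
  have xe: "xi c = (\<lambda>z. \<Sum>n. a n * z ^ n)" by (simp add: xi_ps a_def)
  have d0: "\<And>z. norm z < R \<Longrightarrow> (xi c has_field_derivative P1 z) (at z)"
    unfolding xe P1_def by (rule termdiffs_strong'[OF s0])
  have d1: "\<And>z. norm z < R \<Longrightarrow> (P1 has_field_derivative P2 z) (at z)"
    unfolding P1_def P2_def by (rule termdiffs_strong'[OF s1])
  have d2: "\<And>z. norm z < R \<Longrightarrow> (P2 has_field_derivative P3 z) (at z)"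
    unfolding P3_def P2_def by (rule termdiffs_strong'[OF s2])
  have e1: "\<And>z. norm z < R \<Longrightarrow> deriv (xi c) z = P1 z" using d0 DERIV_imp_deriv by blast
  have d1': "\<And>z. norm z < R \<Longrightarrow> (deriv (xi c) has_field_derivative P2 z) (at z)"
  proof -
    fix z :: real assume z: "norm z < R"
    show "(deriv (xi c) has_field_derivative P2 z) (at z)"
      by (rule has_field_derivative_transform_within_open[OF d1[OF z], of "ball 0 R"])
         (use z e1 in auto)
  qed
  have e2: "\<And>z. norm z < R \<Longrightarrow> deriv (deriv (xi c)) z = P2 z" using d1' DERIV_imp_deriv by blast
  have "continuous_on {0..1} P1"
    by (rule continuous_at_imp_continuous_on) (use d1 R in \<open>force intro: DERIV_isCont\<close>)
  then show "continuous_on {0..1} (deriv (xi c))"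
    by (rule continuous_on_eq) (use e1 R in auto)
  have "continuous_on {0..1} P2"
    by (rule continuous_at_imp_continuous_on) (use d2 R in \<open>force intro: DERIV_isCont\<close>)
  then show "continuous_on {0..1} (deriv (deriv (xi c)))"
    by (rule continuous_on_eq) (use e2 R in auto)
qed



lemma cdf01_mono:
  assumes "Pr01 M" shows "mono (cdf01 M)"
proof -
  interpret prob_space M using assms unfolding Pr01_def by blast
  have sM: "sets M = sets borel" using assms unfolding Pr01_def by blast
  show ?thesis unfolding mono_def cdf01_def
    by (intro allI impI finite_measure_mono) (auto simp: sM)
qed

lemma muhat_has_integral:
  assumes "Pr01 M" "0 \<le> t" "t \<le> 1"
  shows "((\<lambda>s. cdf01 M s) has_integral (LINT x:{0..1}|M. (1 - max x t))) {t..1}"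
proof -
  interpret prob_space M using assms unfolding Pr01_def by blast
  have sM[measurable_cong]: "sets M = sets borel" using assms unfolding Pr01_def by blast
  interpret pair_sigma_finite M lborel
    by (simp add: pair_sigma_finite_def lborel.sigma_finite_measure_axioms sigma_finite_measure_axioms)
  define S where "S = {p::real\<times>real. t \<le> snd p \<and> snd p \<le> 1 \<and> 0 \<le> fst p \<and> fst p \<le> snd p}"
  define h where "h = (\<lambda>x::real. indicator {0..1} x * (1 - max x t))"
  define g where "g = (\<lambda>s::real. indicator {t..1} s * cdf01 M s)"
  have hnn: "0 \<le> h x" for x using assms by (auto simp: h_def indicator_def)
  have hb: "h x \<le> 1" for x using assms by (auto simp: h_def indicator_def)
  have hm[measurable]: "h \<in> borel_measurable borel" unfolding h_def by measurable
  have gm: "g \<in> borel_measurable borel"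
    unfolding g_def using borel_measurable_mono[OF cdf01_mono[OF assms(1)]] by measurable
  have spM: "space M = UNIV" using sets_eq_imp_space_eq[OF sM] by simp
  have "{p \<in> space (M \<Otimes>\<^sub>M lborel). t \<le> snd p \<and> snd p \<le> 1 \<and> 0 \<le> fst p \<and> fst p \<le> snd p} \<in> sets (M \<Otimes>\<^sub>M lborel)"
    by measurable
  then have Sm: "S \<in> sets (M \<Otimes>\<^sub>M lborel)"
    by (simp add: S_def space_pair_measure spM)
  have inner1: "ennreal (g s) = (\<integral>\<^sup>+ x. indicator S (x, s) \<partial>M)" for s
  proof (cases "t \<le> s \<and> s \<le> 1")
    case True
    have "(\<integral>\<^sup>+ x. indicator S (x, s) \<partial>M) = (\<integral>\<^sup>+ x. indicator {0..s} x \<partial>M)"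
      by (rule nn_integral_cong) (use True in \<open>auto simp: S_def indicator_def\<close>)
    also have "\<dots> = emeasure M {0..s}" by (simp add: sM)
    also have "\<dots> = ennreal (g s)" using True by (simp add: g_def cdf01_def emeasure_eq_measure)
    finally show ?thesis by simp
  next
    case False
    then show ?thesis by (auto simp: S_def indicator_def g_def)
  qed
  have inner2: "(\<integral>\<^sup>+ s. indicator S (x, s) \<partial>lborel) = ennreal (h x)" for x
  proof (cases "0 \<le> x \<and> x \<le> 1")
    case True
    have "(\<integral>\<^sup>+ s. indicator S (x, s) \<partial>lborel) = (\<integral>\<^sup>+ s. indicator {max x t..1} s \<partial>lborel)"
      by (rule nn_integral_cong) (use True in \<open>auto simp: S_def indicator_def\<close>)
    also have "\<dots> = ennreal (h x)" using True assms by (simp add: h_def)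
    finally show ?thesis .
  next
    case False
    then have "\<And>s. indicator S (x,s) = (0::ennreal)" by (auto simp: S_def indicator_def)
    then show ?thesis using False by (simp add: h_def)
  qed
  have hint: "integrable M h"
    by (rule integrable_const_bound[where B=1]) (use hnn hb in auto)
  have "(\<integral>\<^sup>+ s. ennreal (g s) \<partial>lborel) = (\<integral>\<^sup>+ s. (\<integral>\<^sup>+ x. indicator S (x, s) \<partial>M) \<partial>lborel)"
    by (simp add: inner1)
  also have "\<dots> = (\<integral>\<^sup>+ x. (\<integral>\<^sup>+ s. indicator S (x, s) \<partial>lborel) \<partial>M)"
    by (rule Fubini) (use Sm in measurable)
  also have "\<dots> = (\<integral>\<^sup>+ x. ennreal (h x) \<partial>M)" by (simp add: inner2)
  also have "\<dots> = ennreal (integral\<^sup>L M h)"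
    by (rule nn_integral_eq_integral[OF hint]) (use hnn in auto)
  finally have eq: "(\<integral>\<^sup>+ s. ennreal (g s) \<partial>lborel) = ennreal (integral\<^sup>L M h)" .
  have "(g has_integral (integral\<^sup>L M h)) UNIV"
    by (rule nn_integral_has_integral[OF gm _ eq])
       (use hnn assms in \<open>auto simp: g_def cdf01_def intro!: integral_nonneg_AE\<close>)
  then have "((\<lambda>s. if s \<in> {t..1} then cdf01 M s else 0) has_integral (integral\<^sup>L M h)) UNIV"
    by (rule has_integral_cong[THEN iffD1, rotated]) (auto simp: g_def indicator_def)
  then have "((\<lambda>s. cdf01 M s) has_integral (integral\<^sup>L M h)) {t..1}"
    by (simp only: has_integral_restrict_UNIV)
  moreover have "integral\<^sup>L M h = (LINT x:{0..1}|M. (1 - max x t))"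
    by (simp add: h_def set_lebesgue_integral_def)
  ultimately show ?thesis by simp
qed



lemma muhat_eq:
  assumes "Pr01 M" "0 \<le> t" "t \<le> 1"
  shows "muhat M t = (LINT x:{0..1}|M. (1 - max x t))"
  unfolding muhat_def using muhat_has_integral[OF assms] by (rule integral_unique)

lemma muhat_bounds:
  assumes "Pr01 M" "0 \<le> t" "t \<le> 1"
  shows "0 \<le> muhat M t" "muhat M t \<le> 1"
proof -
  interpret prob_space M using assms unfolding Pr01_def by blast
  have sM[measurable_cong]: "sets M = sets borel" using assms unfolding Pr01_def by blast
  define h where "h = (\<lambda>x::real. indicator {0..1} x * (1 - max x t))"
  have hnn: "0 \<le> h x" for x using assms by (auto simp: h_def indicator_def)
  have hb: "h x \<le> 1" for x using assms by (auto simp: h_def indicator_def)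
  have hm[measurable]: "h \<in> borel_measurable M" unfolding h_def by measurable
  have hint: "integrable M h"
    by (rule integrable_const_bound[where B=1]) (use hnn hb in auto)
  have eq: "muhat M t = integral\<^sup>L M h"
    using muhat_eq[OF assms] by (simp add: h_def set_lebesgue_integral_def)
  show "0 \<le> muhat M t" unfolding eq by (rule integral_nonneg_AE) (use hnn in auto)
  have "integral\<^sup>L M h \<le> integral\<^sup>L M (\<lambda>_. 1)"
    by (rule integral_mono[OF hint]) (use hb in auto)
  then show "muhat M t \<le> 1" unfolding eq by (simp add: prob_space)
qed

lemma muhat_cont:
  assumes "Pr01 M"
  shows "continuous_on {0..1} (muhat M)"
proof -
  have "(cdf01 M) integrable_on {0..1}"
    using muhat_has_integral[OF assms, of 0] by auto
  then show ?thesis unfolding muhat_def[abs_def]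
    by (rule indefinite_integral_continuous_1')
qed

lemma muhat_conv:
  assumes "Pr01 M" "\<And>n. Pr01 (Ms n)" "weak_star_conv Ms M" "0 \<le> t" "t \<le> 1"
  shows "(\<lambda>n. muhat (Ms n) t) \<longlonglongrightarrow> muhat M t"
proof -
  have "continuous_on {0..1} (\<lambda>x::real. 1 - max x t)" by (intro continuous_intros)
  then have "(\<lambda>n. (LINT x:{0..1}|Ms n. (1 - max x t))) \<longlonglongrightarrow> (LINT x:{0..1}|M. (1 - max x t))"
    using assms(3) unfolding weak_star_conv_def by blast
  then show ?thesis using muhat_eq[OF assms(1) assms(4,5)] muhat_eq[OF assms(2) assms(4,5)] by simp
qed

lemma G_liminf:
  fixes x :: "nat \<Rightarrow> real" and s :: real
  assumes "x \<longlonglongrightarrow> x0" "\<And>n. 0 \<le> x n" "0 \<le> x0" "s < 1"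
  shows "(if x0 = 0 then \<infinity> else ennreal (1 / x0 - 1 / (1 - s)))
     \<le> liminf (\<lambda>n. if x n = 0 then \<infinity> else ennreal (1 / x n - 1 / (1 - s)))"
proof (cases "x0 = 0")
  case False
  then have x0p: "x0 > 0" using assms by simp
  then have ev: "eventually (\<lambda>n. x n > 0) sequentially" using assms(1) order_tendstoD(1) by blast
  have "((\<lambda>n. ennreal (1 / x n - 1 / (1 - s))) \<longlongrightarrow> ennreal (1 / x0 - 1 / (1 - s))) sequentially"
    by (intro tendsto_ennrealI tendsto_intros assms(1)) (use x0p in auto)
  then have "((\<lambda>n. if x n = 0 then \<infinity> else ennreal (1 / x n - 1 / (1 - s))) \<longlongrightarrow> ennreal (1 / x0 - 1 / (1 - s))) sequentially"
    by (rule tendsto_cong[THEN iffD1, rotated]) (use ev in \<open>auto elim!: eventually_mono\<close>)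
  then show ?thesis using False by (simp add: lim_imp_Liminf)
next
  case True
  show ?thesis unfolding True le_Liminf_iff
  proof (intro allI impI)
    fix y :: ennreal assume "y < (if (0::real) = 0 then \<infinity> else ennreal (1 / 0 - 1 / (1 - s)))"
    then have "y < top" by simp
    then obtain r where r: "y = ennreal r" "0 \<le> r" by (cases y) auto
    define K where "K = r + 1 / (1 - s) + 1"
    have "1 / (1 - s) > 0" using assms(4) by simp
    then have Kp: "K > 0" using r unfolding K_def by linarith
    have "eventually (\<lambda>n. x n < 1 / K) sequentially"
      using assms(1) True Kp order_tendstoD(2) by fastforce
    then show "eventually (\<lambda>n. y < (if x n = 0 then \<infinity> else ennreal (1 / x n - 1 / (1 - s)))) sequentially"
    proof (rule eventually_mono)
      fix n assume xn: "x n < 1 / K"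
      show "y < (if x n = 0 then \<infinity> else ennreal (1 / x n - 1 / (1 - s)))"
      proof (cases "x n = 0")
        case True then show ?thesis using r by simp
      next
        case False
        then have xp: "x n > 0" using assms(2)[of n] by simp
        have "K < 1 / x n" using xn xp Kp by (simp add: field_simps)
        then have "r < 1 / x n - 1 / (1 - s)" unfolding K_def by simp
        then show ?thesis using False r by (simp add: ennreal_less_iff)
      qed
    qed
  qed
qed



lemma Pfun_lsc:
  assumes "is_model c"
  shows "weak_star_lsc (Pfun \<beta> h c)"
  unfolding weak_star_lsc_def
proof (intro allI impI)
  fix Ms M assume PM: "Pr01 M" and PMs: "\<forall>n. Pr01 (Ms n)" and wc: "weak_star_conv Ms M"
  define D where "D = (\<lambda>s. \<beta>\<^sup>2 * deriv (deriv (xi c)) s)"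
  have Dc: "continuous_on {0..1} D" unfolding D_def using xi_derivs(2)[OF assms] by (intro continuous_intros)
  obtain B where B: "B \<ge> 0" "\<And>s. s \<in> {0..1} \<Longrightarrow> norm (D s) \<le> B"
    using continuous_on_compact_bound[OF compact_Icc Dc] by blast
  define A where "A = (\<lambda>n. integral {0..1} (\<lambda>s. D s * muhat (Ms n) s))"
  define A0 where "A0 = integral {0..1} (\<lambda>s. D s * muhat M s)"
  define C where "C = (\<lambda>n. h\<^sup>2 * muhat (Ms n) 0)"
  define C0 where "C0 = h\<^sup>2 * muhat M 0"
  define G where "G = (\<lambda>N s. (if muhat N s = 0 then \<infinity> else ennreal (1 / muhat N s - 1 / (1 - s))) * indicator {0..<1::real} s)"
  define Bn where "Bn = (\<lambda>n. \<integral>\<^sup>+ s. G (Ms n) s \<partial>lborel)"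
  define B0 where "B0 = (\<integral>\<^sup>+ s. G M s \<partial>lborel)"
  have conv: "\<And>s. s \<in> {0..1} \<Longrightarrow> (\<lambda>n. muhat (Ms n) s) \<longlonglongrightarrow> muhat M s"
    using muhat_conv[OF PM _ wc] PMs by auto
  have Aconv: "A \<longlonglongrightarrow> A0"
    unfolding A_def A0_def
  proof (rule dominated_convergence(2)[where h="\<lambda>_. B"])
    show "(\<lambda>s. D s * muhat (Ms k) s) integrable_on {0..1}" for k
      by (rule integrable_continuous_interval) (intro continuous_intros Dc muhat_cont PMs[rule_format])
    show "(\<lambda>_. B) integrable_on {0..1::real}" by (intro integrable_continuous_interval continuous_intros)
    show "norm (D s * muhat (Ms k) s) \<le> B" if "s \<in> {0..1}" for k s
    proof -
      have "\<bar>muhat (Ms k) s\<bar> \<le> 1" using muhat_bounds[OF PMs[rule_format, of k]] that by auto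
      then show ?thesis using B(2)[OF that] B(1) by (simp add: abs_mult mult_le_one mult_mono' order_trans[OF mult_right_mono] ) (metis abs_ge_zero mult_left_le mult_mono order_trans)
    qed
    show "(\<lambda>k. D s * muhat (Ms k) s) \<longlonglongrightarrow> D s * muhat M s" if "s \<in> {0..1}" for s
      by (intro tendsto_intros conv that)
  qed
  have Cconv: "C \<longlonglongrightarrow> C0" unfolding C_def C0_def by (intro tendsto_intros conv) auto
  have Gm: "G N \<in> borel_measurable borel" if "Pr01 N" for N
  proof -
    define m where "m = (\<lambda>s::real. muhat N (max 0 (min s 1)))"
    have "continuous_on UNIV m" unfolding m_def
      by (rule continuous_on_compose2[OF muhat_cont[OF that]]) (auto intro!: continuous_intros)
    then have [measurable]: "m \<in> borel_measurable borel" by (rule borel_measurable_continuous_onI)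
    have "G N = (\<lambda>s. (if m s = 0 then \<infinity> else ennreal (1 / m s - 1 / (1 - s))) * indicator {0..<1::real} s)"
      by (auto simp: G_def m_def fun_eq_iff indicator_def)
    also have "\<dots> \<in> borel_measurable borel" by measurable
    finally show ?thesis .
  qed
  have "B0 \<le> (\<integral>\<^sup>+ s. liminf (\<lambda>n. G (Ms n) s) \<partial>lborel)"
    unfolding B0_def
  proof (rule nn_integral_mono)
    fix s :: real
    show "G M s \<le> liminf (\<lambda>n. G (Ms n) s)"
    proof (cases "s \<in> {0..<1}")
      case False then show ?thesis by (simp add: G_def)
    next
      case True
      then have s01: "s \<in> {0..1}" by auto
      have "G M s = (if muhat M s = 0 then \<infinity> else ennreal (1 / muhat M s - 1 / (1 - s)))"
        using True by (simp add: G_def)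
      also have "\<dots> \<le> liminf (\<lambda>n. if muhat (Ms n) s = 0 then \<infinity> else ennreal (1 / muhat (Ms n) s - 1 / (1 - s)))"
        by (rule G_liminf[OF conv[OF s01]]) (use True muhat_bounds PMs PM in auto)
      also have "(\<lambda>n. if muhat (Ms n) s = 0 then \<infinity> else ennreal (1 / muhat (Ms n) s - 1 / (1 - s))) = (\<lambda>n. G (Ms n) s)"
        using True by (simp add: G_def fun_eq_iff)
      finally show ?thesis .
    qed
  qed
  also have "\<dots> \<le> liminf Bn" unfolding Bn_def
    by (rule nn_integral_liminf) (use Gm PMs in auto)
  finally have Bliminf: "B0 \<le> liminf Bn" .
  have PfM: "Pfun \<beta> h c M = ereal (1/2) * (ereal A0 + enn2ereal B0 + ereal C0)"
    by (simp add: Pfun_def A0_def B0_def C0_def D_def G_def mult.assoc)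
  have PfMs: "Pfun \<beta> h c (Ms n) = ereal (1/2) * (ereal (A n) + enn2ereal (Bn n) + ereal (C n))" for n
    by (simp add: Pfun_def A_def Bn_def C_def D_def G_def mult.assoc)
  have e1: "liminf (\<lambda>n. enn2ereal (Bn n)) = enn2ereal (liminf Bn)"
    by (rule Liminf_compose_continuous_mono[OF continuous_on_enn2ereal])
       (auto simp: mono_def less_eq_ennreal.rep_eq)
  have "(\<lambda>n. ereal (A n) + ereal (C n)) \<longlonglongrightarrow> ereal (A0 + C0)"
    using Aconv Cconv by (simp add: tendsto_add)
  then have e2: "liminf (\<lambda>n. (ereal (A n) + ereal (C n)) + enn2ereal (Bn n)) = ereal (A0 + C0) + liminf (\<lambda>n. enn2ereal (Bn n))"
    by (rule ereal_liminf_lim_add) simp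
  have "liminf (\<lambda>n. Pfun \<beta> h c (Ms n)) = ereal (1/2) * liminf (\<lambda>n. (ereal (A n) + ereal (C n)) + enn2ereal (Bn n))"
    unfolding PfMs by (subst Liminf_ereal_mult_left[symmetric]) (auto simp: ac_simps)
  also have "\<dots> = ereal (1/2) * (ereal (A0 + C0) + enn2ereal (liminf Bn))" by (simp only: e1 e2)
  finally have L: "liminf (\<lambda>n. Pfun \<beta> h c (Ms n)) = ereal (1/2) * (ereal (A0 + C0) + enn2ereal (liminf Bn))" .
  have "enn2ereal B0 \<le> enn2ereal (liminf Bn)" using Bliminf by (simp add: less_eq_ennreal.rep_eq)
  then have "ereal A0 + enn2ereal B0 + ereal C0 \<le> ereal (A0 + C0) + enn2ereal (liminf Bn)"
    by (metis (no_types, lifting) add.commute add.left_commute add_left_mono plus_ereal.simps(1))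
  then show "Pfun \<beta> h c M \<le> liminf (\<lambda>n. Pfun \<beta> h c (Ms n))"
    unfolding PfM L by (rule ereal_mult_left_mono) simp
qed



definition M0 :: "real measure" where "M0 = density lborel (indicator {0..1})"
definition aa :: "nat \<Rightarrow> real" where "aa n = 1 - inverse (real (Suc n))"
definition Mn :: "nat \<Rightarrow> real measure" where "Mn n = distr M0 borel (\<lambda>x. min x (aa n))"

lemma aa_bounds: "0 \<le> aa n" "aa n < 1"
  by (auto simp: aa_def field_simps)

lemma aa_lim: "aa \<longlonglongrightarrow> 1"
  using LIMSEQ_inverse_real_of_nat_add_minus[of 1] by (simp add: aa_def[abs_def])

lemma sets_M0[measurable_cong, simp]: "sets M0 = sets borel"
  by (simp add: M0_def)

lemma space_M0[simp]: "space M0 = UNIV"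
  by (simp add: M0_def)

lemma emeasure_M0: "A \<in> sets borel \<Longrightarrow> emeasure M0 A = emeasure lborel (A \<inter> {0..1})"
  unfolding M0_def
  by (subst emeasure_density) (auto simp: indicator_inter_arith[symmetric] mult.commute)

lemma measure_M0: "A \<in> sets borel \<Longrightarrow> measure M0 A = measure lborel (A \<inter> {0..1})"
  by (simp add: measure_def emeasure_M0)

lemma prob_M0: "prob_space M0"
  by (rule prob_spaceI) (simp add: emeasure_M0)

lemma Pr01_M0: "Pr01 M0"
  unfolding Pr01_def using prob_M0 by (simp add: emeasure_M0)

lemma sets_Mn[measurable_cong, simp]: "sets (Mn n) = sets borel"
  by (simp add: Mn_def)

lemma emeasure_Mn: "A \<in> sets borel \<Longrightarrow> emeasure (Mn n) A = emeasure M0 ((\<lambda>x. min x (aa n)) -` A)"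
  unfolding Mn_def by (subst emeasure_distr) auto

lemma measure_Mn: "A \<in> sets borel \<Longrightarrow> measure (Mn n) A = measure M0 ((\<lambda>x. min x (aa n)) -` A)"
  by (simp add: measure_def emeasure_Mn)

lemma Pr01_Mn: "Pr01 (Mn n)"
proof -
  have "prob_space (Mn n)" unfolding Mn_def by (rule prob_space.prob_space_distr[OF prob_M0]) auto
  moreover have "(\<lambda>x. min x (aa n)) -` {0..1} = {0..}" using aa_bounds[of n] by auto
  then have "emeasure (Mn n) {0..1} = 1" by (simp add: emeasure_Mn emeasure_M0)
  ultimately show ?thesis unfolding Pr01_def by simp
qed

lemma weak_conv_Mn: "weak_star_conv Mn M0"
  unfolding weak_star_conv_def
proof (intro allI impI)
  fix f :: "real \<Rightarrow> real" assume fc: "continuous_on {0..1} f"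
  obtain Bf where Bf: "Bf \<ge> 0" "\<And>x. x \<in> {0..1} \<Longrightarrow> norm (f x) \<le> Bf"
    using continuous_on_compact_bound[OF compact_Icc fc] by blast
  define g where "g = (\<lambda>x. indicator {0..1} x *\<^sub>R f x)"
  have gm[measurable]: "g \<in> borel_measurable borel"
    unfolding g_def by (rule borel_measurable_continuous_on_indicator) (use fc in auto)
  have eq: "(LINT x:{0..1}|Mn n. f x) = integral\<^sup>L M0 (\<lambda>y. g (min y (aa n)))" for n
    unfolding set_lebesgue_integral_def Mn_def g_def[symmetric]
    by (rule integral_distr) auto
  have eq0: "(LINT x:{0..1}|M0. f x) = integral\<^sup>L M0 g"
    unfolding set_lebesgue_integral_def g_def ..
  interpret prob_space M0 by (rule prob_M0)
  have "(\<lambda>n. integral\<^sup>L M0 (\<lambda>y. g (min y (aa n)))) \<longlonglongrightarrow> integral\<^sup>L M0 g"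
  proof (rule integral_dominated_convergence[where w="\<lambda>_. Bf"])
    show "g \<in> borel_measurable M0" by measurable
    show "(\<lambda>y. g (min y (aa n))) \<in> borel_measurable M0" for n by measurable
    show "integrable M0 (\<lambda>_. Bf)" by simp
    show "AE x in M0. norm (g (min x (aa n))) \<le> Bf" for n
      by (rule AE_I2) (use Bf in \<open>auto simp: g_def indicator_def\<close>)
    have "AE x in M0. x \<in> {0..1}"
      unfolding M0_def by (subst AE_density) (auto simp: indicator_def)
    then show "AE x in M0. (\<lambda>n. g (min x (aa n))) \<longlonglongrightarrow> g x"
    proof (rule AE_mp[OF _ AE_I2], intro impI)
      fix x :: real assume x: "x \<in> {0..1}"
      have "(\<lambda>n. min x (aa n)) \<longlonglongrightarrow> min x 1" by (intro tendsto_intros aa_lim)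
      then have "(\<lambda>n. min x (aa n)) \<longlonglongrightarrow> x" using x by simp
      then have "(\<lambda>n. f (min x (aa n))) \<longlonglongrightarrow> f x"
        by (rule continuous_on_tendsto_compose[OF fc]) (use x aa_bounds in \<open>auto intro!: always_eventually simp: min_le_iff_disj\<close>)
      moreover have "g (min x (aa n)) = f (min x (aa n))" for n
        using x aa_bounds[of n] by (auto simp: g_def)
      moreover have "g x = f x" using x by (simp add: g_def)
      ultimately show "(\<lambda>n. g (min x (aa n))) \<longlonglongrightarrow> g x" by simp
    qed
  qed
  then show "(\<lambda>n. LINT x:{0..1}|Mn n. f x) \<longlonglongrightarrow> (LINT x:{0..1}|M0. f x)"
    unfolding eq eq0 .
qed



lemma qstar_M0: "qstar M0 = 1"
  unfolding qstar_def
proof (rule cSup_eq_maximum)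
  show "1 \<in> supp M0" unfolding supp_def
  proof (safe)
    fix e :: real assume e: "e > 0"
    have "{max 0 (1 - e/2)..1} \<subseteq> ball 1 e \<inter> {0..1}" using e by (auto simp: dist_real_def)
    then have "emeasure lborel {max 0 (1 - e/2)..1} \<le> emeasure lborel (ball (1::real) e \<inter> {0..1})"
      by (intro emeasure_mono) auto
    moreover have "emeasure lborel {max 0 (1 - e/2)..1} > 0" using e by simp
    ultimately show "emeasure M0 (ball 1 e) > 0" by (simp add: emeasure_M0)
  qed
  fix x assume "x \<in> supp M0"
  show "x \<le> 1"
  proof (rule ccontr)
    assume "\<not> x \<le> 1"
    then have "ball x (x - 1) \<inter> {0..1} = {}" by (auto simp: dist_real_def)
    then have "emeasure M0 (ball x (x - 1)) = 0" by (simp add: emeasure_M0)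
    moreover have "emeasure M0 (ball x (x - 1)) > 0"
      using \<open>x \<in> supp M0\<close> \<open>\<not> x \<le> 1\<close> unfolding supp_def by simp
    ultimately show False by simp
  qed
qed

lemma qstar_Mn: "qstar (Mn n) = aa n"
  unfolding qstar_def
proof (rule cSup_eq_maximum)
  show "aa n \<in> supp (Mn n)" unfolding supp_def
  proof (safe)
    fix e :: real assume e: "e > 0"
    have "{aa n..1} \<subseteq> ((\<lambda>x. min x (aa n)) -` ball (aa n) e) \<inter> {0..1}" using e aa_bounds[of n] by (auto simp: dist_real_def)
    moreover have pm: "(\<lambda>x. min x (aa n)) -` ball (aa n) e \<in> sets borel"
    proof -
      have "(\<lambda>x. min x (aa n)) \<in> borel_measurable borel" by measurable
      from measurable_sets[OF this borel_open[OF open_ball]] show ?thesis by simp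
    qed
    ultimately have "emeasure lborel {aa n..1} \<le> emeasure lborel (((\<lambda>x. min x (aa n)) -` ball (aa n) e) \<inter> {0..1})"
      apply - apply (rule emeasure_mono) apply assumption apply simp done
    moreover have "emeasure lborel {aa n..1} > 0" using aa_bounds[of n] by simp
    moreover have "emeasure (Mn n) (ball (aa n) e) = emeasure lborel (((\<lambda>x. min x (aa n)) -` ball (aa n) e) \<inter> {0..1})"
      apply (subst emeasure_Mn) apply (rule borel_open) apply (rule open_ball)
      apply (rule emeasure_M0) apply (rule pm) done
    ultimately show "emeasure (Mn n) (ball (aa n) e) > 0" by order
  qed
  fix x assume "x \<in> supp (Mn n)"
  show "x \<le> aa n"
  proof (rule ccontr)
    assume "\<not> x \<le> aa n"
    then have "(\<lambda>y. min y (aa n)) -` ball x (x - aa n) = {}" by (auto simp: dist_real_def)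
    then have "emeasure (Mn n) (ball x (x - aa n)) = 0"
      apply (subst emeasure_Mn) apply (rule borel_open) apply (rule open_ball) by simp
    moreover have "emeasure (Mn n) (ball x (x - aa n)) > 0"
      using \<open>x \<in> supp (Mn n)\<close> \<open>\<not> x \<le> aa n\<close> unfolding supp_def by simp
    ultimately show False by simp
  qed
qed

lemma cdf_Mn1: "0 \<le> s \<Longrightarrow> s < aa n \<Longrightarrow> cdf01 (Mn n) s = s"
proof -
  assume s: "0 \<le> s" "s < aa n"
  then have "(\<lambda>x. min x (aa n)) -` {0..s} = {0..s}" using aa_bounds[of n] by auto
  moreover have "{0..s} \<inter> {0..1} = {0..s}" using s aa_bounds[of n] by auto
  ultimately show ?thesis using s by (simp add: cdf01_def measure_Mn measure_M0)
qed

lemma cdf_Mn2: "aa n \<le> s \<Longrightarrow> cdf01 (Mn n) s = 1"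
proof -
  assume s: "aa n \<le> s"
  then have "(\<lambda>x. min x (aa n)) -` {0..s} = {0..}" using aa_bounds[of n] by auto
  moreover have "{0..} \<inter> {0..1} = {0..1::real}" by auto
  ultimately show ?thesis by (simp add: cdf01_def measure_Mn measure_M0)
qed

lemma muhat_Mn:
  assumes "0 \<le> s" "s \<le> aa n"
  shows "muhat (Mn n) s = ((aa n)\<^sup>2 - s\<^sup>2) / 2 + (1 - aa n)"
proof -
  let ?a = "aa n"
  have i0: "((\<lambda>u. u) has_integral (?a\<^sup>2 / 2 - s\<^sup>2 / 2)) {s..?a}"
    by (rule fundamental_theorem_of_calculus[OF assms(2)])
       (auto intro!: derivative_eq_intros simp: has_real_derivative_iff_has_vector_derivative[symmetric])
  have i1: "(cdf01 (Mn n) has_integral (?a\<^sup>2 / 2 - s\<^sup>2 / 2)) {s..?a}"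
    by (rule has_integral_spike_finite[where S="{?a}", OF _ _ i0]) (use assms in \<open>auto simp: cdf_Mn1\<close>)
  have i00: "((\<lambda>u. 1) has_integral (1 - ?a)) {?a..1}"
    using has_integral_const_real[of "1::real" ?a 1] aa_bounds[of n] by simp
  have i2: "(cdf01 (Mn n) has_integral (1 - ?a)) {?a..1}"
    by (rule has_integral_spike_finite[where S="{}", OF _ _ i00]) (auto simp: cdf_Mn2)
  have "(cdf01 (Mn n) has_integral ((?a\<^sup>2 / 2 - s\<^sup>2 / 2) + (1 - ?a))) {s..1}"
    by (rule has_integral_combine[OF assms(2) _ i1 i2]) (use aa_bounds[of n] in simp)
  then show ?thesis unfolding muhat_def by (auto dest!: integral_unique simp: field_simps)
qed



lemma I3_bound:
  fixes a :: real
  assumes a: "0 \<le> a" "a < 1"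
    and mu: "\<And>s. s \<in> {0..a} \<Longrightarrow> m s = (a\<^sup>2 - s\<^sup>2) / 2 + (1 - a)"
  shows "integral {0..a} (\<lambda>s. 1 / m s) + ln (1 - a) \<le> ln 2"
proof -
  define f where "f = (\<lambda>s::real. 1 / ((a\<^sup>2 - s\<^sup>2) / 2 + (1 - a)))"
  define g where "g = (\<lambda>s::real. 1 / (1 - s) + 1 / (1 + s))"
  have Dlow: "(1 - s\<^sup>2) / 2 \<le> (a\<^sup>2 - s\<^sup>2) / 2 + (1 - a)" for s
  proof -
    have "0 \<le> (1 - a)\<^sup>2 / 2" by simp
    then show ?thesis by (simp add: power2_eq_square field_simps)
  qed
  have Dpos: "0 < (1 - s\<^sup>2) / 2" if "s \<in> {0..a}" for s
  proof -
    have "s\<^sup>2 < 1" using that a by (simp add: abs_square_less_1)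
    then show ?thesis by simp
  qed
  have e1: "integral {0..a} (\<lambda>s. 1 / m s) = integral {0..a} f"
    by (rule integral_cong) (simp add: mu f_def)
  have fi: "f integrable_on {0..a}"
  proof (rule integrable_continuous_interval)
    have nz: "\<forall>s\<in>{0..a}. (a\<^sup>2 - s\<^sup>2) / 2 + (1 - a) \<noteq> 0"
    proof
      fix s :: real assume "s \<in> {0..a}"
      then show "(a\<^sup>2 - s\<^sup>2) / 2 + (1 - a) \<noteq> 0" using Dpos[of s] Dlow[of s] by linarith
    qed
    show "continuous_on {0..a} f" unfolding f_def
      by (intro continuous_intros) (use nz in auto)
  qed
  have gi: "(g has_integral (ln (1 + a) - ln (1 - a))) {0..a}"
  proof -
    have "(g has_integral ((ln (1 + a) - ln (1 - a)) - (ln (1 + 0) - ln (1 - 0)))) {0..a}"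
    proof (rule fundamental_theorem_of_calculus[OF a(1)])
      fix s :: real assume s: "s \<in> {0..a}"
      then have s1: "s < 1" using a by simp
      have "((\<lambda>s. ln (1 + s) - ln (1 - s)) has_real_derivative (1 / (1 + s) - (- 1) / (1 - s))) (at s within {0..a})"
        by (rule derivative_eq_intros refl | use s s1 in simp)+
      then show "((\<lambda>s. ln (1 + s) - ln (1 - s)) has_vector_derivative g s) (at s within {0..a})"
        by (simp add: g_def has_real_derivative_iff_has_vector_derivative[symmetric] algebra_simps)
    qed
    then show ?thesis by simp
  qed
  have fg: "f s \<le> g s" if "s \<in> {0..a}" for s
  proof -
    have s1: "s < 1" "0 \<le> s" using that a by auto
    have p1: "0 < (1 - s\<^sup>2) / 2" by (rule Dpos[OF that])
    have p2: "0 < (a\<^sup>2 - s\<^sup>2) / 2 + (1 - a)" using p1 Dlow[of s] by linarith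
    have "g s = 1 / ((1 - s\<^sup>2) / 2)" using s1 by (simp add: g_def field_simps power2_eq_square)
    moreover have "f s \<le> 1 / ((1 - s\<^sup>2) / 2)" unfolding f_def
      by (rule divide_left_mono[OF Dlow[of s] _ mult_pos_pos[OF p2 p1]]) simp
    ultimately show ?thesis by simp
  qed
  have "integral {0..a} f \<le> integral {0..a} g"
    by (rule integral_le[OF fi]) (use gi fg in auto)
  also have "\<dots> = ln (1 + a) - ln (1 - a)" using gi by (rule integral_unique)
  finally have "integral {0..a} (\<lambda>s. 1 / m s) + ln (1 - a) \<le> ln (1 + a)" using e1 by simp
  also have "ln (1 + a) \<le> ln 2" using a by simp
  finally show ?thesis .
qed

lemma Ptilde_M0: "Ptilde \<beta> h c M0 = \<infinity>"
  by (simp add: Ptilde_def qstar_M0)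

lemma Ptilde_Mn_bound:
  assumes "is_model c"
  obtains K where "\<And>n. Ptilde \<beta> h c (Mn n) \<le> ereal K"
proof -
  obtain B1 where B1: "B1 \<ge> 0" "\<And>s. s \<in> {0..1} \<Longrightarrow> norm (deriv (xi c) s) \<le> B1"
    using continuous_on_compact_bound[OF compact_Icc xi_derivs(1)[OF assms]] by blast
  define K where "K = (1/2) * (\<beta>\<^sup>2 * B1 + h\<^sup>2 + ln 2)"
  have "Ptilde \<beta> h c (Mn n) \<le> ereal K" for n
  proof -
    let ?a = "aa n"
    define I1 where "I1 = integral {0..1} (\<lambda>s. \<beta>\<^sup>2 * deriv (xi c) s * cdf01 (Mn n) s)"
    have cdfb: "0 \<le> cdf01 (Mn n) s \<and> cdf01 (Mn n) s \<le> 1" if "s \<in> {0..1}" for s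
      using that cdf_Mn1[of s n] cdf_Mn2[of n s] by (cases "s < ?a") auto
    have nb: "norm (\<beta>\<^sup>2 * deriv (xi c) s * cdf01 (Mn n) s) \<le> \<beta>\<^sup>2 * B1" if "s \<in> {0..1}" for s
    proof -
      have "\<bar>deriv (xi c) s\<bar> \<le> B1" using B1(2)[OF that] by simp
      moreover have "\<bar>cdf01 (Mn n) s\<bar> \<le> 1" using cdfb[OF that] by simp
      ultimately have "\<bar>deriv (xi c) s\<bar> * \<bar>cdf01 (Mn n) s\<bar> \<le> B1 * 1"
        by (intro mult_mono) (use B1 in auto)
      then have "\<beta>\<^sup>2 * (\<bar>deriv (xi c) s\<bar> * \<bar>cdf01 (Mn n) s\<bar>) \<le> \<beta>\<^sup>2 * B1"
        by (intro mult_left_mono) auto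
      then show ?thesis by (simp add: abs_mult mult.assoc)
    qed
    have I1b: "I1 \<le> \<beta>\<^sup>2 * B1"
    proof (cases "(\<lambda>s. \<beta>\<^sup>2 * deriv (xi c) s * cdf01 (Mn n) s) integrable_on {0..1}")
      case True
      have hi: "((\<lambda>s. \<beta>\<^sup>2 * deriv (xi c) s * cdf01 (Mn n) s) has_integral I1) {0..1}"
        using True unfolding I1_def by (rule integrable_integral)
      have "norm I1 \<le> \<beta>\<^sup>2 * B1"
        using has_integral_bound_real[where B="\<beta>\<^sup>2 * B1" and S="{}", OF _ _ hi] nb B1 by simp
      then show ?thesis by simp
    next
      case False
      then have "I1 = 0" unfolding I1_def by (rule not_integrable_integral)
      then show ?thesis using B1 by simp
    qed
    have hb: "h\<^sup>2 * muhat (Mn n) 0 \<le> h\<^sup>2"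
      using muhat_bounds(2)[OF Pr01_Mn, of 0 n] by (simp add: mult_left_le)
    have I3b: "integral {0..?a} (\<lambda>s. 1 / muhat (Mn n) s) + ln (1 - ?a) \<le> ln 2"
      by (rule I3_bound[OF aa_bounds]) (simp add: muhat_Mn)
    have "Ptilde \<beta> h c (Mn n) = ereal ((1/2) * (I1 + h\<^sup>2 * muhat (Mn n) 0
                 + integral {0..?a} (\<lambda>s. 1 / muhat (Mn n) s) + ln (1 - ?a)))"
      using aa_bounds[of n] by (simp add: Ptilde_def qstar_Mn I1_def)
    also have "\<dots> \<le> ereal K" unfolding K_def using I1b hb I3b by simp
    finally show ?thesis .
  qed
  then show ?thesis by (rule that)
qed

theorem corollary6p2:
  fixes \<beta> h :: real and c :: "nat \<Rightarrow> real"
  assumes "\<beta> > 0" and "h \<ge> 0" and "is_model c"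
  shows "weak_star_lsc (Pfun \<beta> h c) \<and> \<not> weak_star_lsc (Ptilde \<beta> h c)"
proof
  show "weak_star_lsc (Pfun \<beta> h c)" by (rule Pfun_lsc[OF assms(3)])
  show "\<not> weak_star_lsc (Ptilde \<beta> h c)"
  proof
    assume "weak_star_lsc (Ptilde \<beta> h c)"
    then have "Ptilde \<beta> h c M0 \<le> liminf (\<lambda>n. Ptilde \<beta> h c (Mn n))"
      unfolding weak_star_lsc_def using Pr01_M0 Pr01_Mn weak_conv_Mn by blast
    moreover obtain K where K: "\<And>n. Ptilde \<beta> h c (Mn n) \<le> ereal K"
      using Ptilde_Mn_bound[OF assms(3)] by blast
    have "liminf (\<lambda>n. Ptilde \<beta> h c (Mn n)) \<le> ereal K"
      by (rule Liminf_le) (auto intro: K always_eventually)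
    ultimately show False by (simp add: Ptilde_M0)
  qed
qed


end
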